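(* Let $K_2$ denote the metric space with two points at distance $1$. For a path $(X_t)_{0<t\ll 1}$ of finite metric spaces, let $f^X$ denote the (partially defined) function on $(0,\infty)$ given by $f^X(s)=\lim_{t\to 0}|sX_t|$. Then: (1) For every $\ell\in(1,\infty)$ there exists a path $(X_t)_{0<t\ll1}$ in $\operatorname{FMet}$ such that $X_t\to K_2$ in the Gromov--Hausdorff topology as $t\to0$, but $\lim_{s\to 0}f^X(s)=\ell$. (2) For every $L\in(2,\infty)$ there exists a path $(X_t)_{0<t\ll1}$ in $\operatorname{FMet}$ such that $X_t\to K_2$ as $t\to 0$, but $\lim_{s\to\infty}f^X(s)=L$. (3) For every $S\in(0,\infty)$ there exists a path $(X_t)_{0<t\ll1}$ in $\operatorname{FMet}$ such that $X_t\to K_2$ as $t\to0$, but the function $f^X$ has a singularity at $S$ (i.e. $f^X(s)$ is unbounded as $s\to S$).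
   Context: For a finite metric space $(X,d)$, its similarity matrix $Z_X$ is the $X\times X$ matrix with entries $e^{-d(x,y)}$. A weighting is a vector $\mathbf{w}\in\mathbb{R}^X$ with $Z_X\mathbf{w}=(1,\dots,1)^\top$; if one exists, the magnitude $|X|$ is the sum of its entries (independent of the choice). For $s>0$, $sX$ denotes the metric space $(X, s\,d)$. $\operatorname{FMet}$ is the set of isometry classes of finite metric spaces with the Gromov--Hausdorff metric. A path $(X_t)_{0<t\ll1}$ is a family of finite metric spaces indexed by $t$ in some interval $(0,\varepsilon)$. *)

theory Defs
  imports "HOL-Analysis.Analysis"
begin

definition finite_metric :: "'a set \<Rightarrow> ('a \<Rightarrow> 'a \<Rightarrow> real) \<Rightarrow> bool" where
  "finite_metric X d \<longleftrightarrow> finite X \<and>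
     (\<forall>x\<in>X. \<forall>y\<in>X. (d x y = 0 \<longleftrightarrow> x = y) \<and> d x y = d y x) \<and>
     (\<forall>x\<in>X. \<forall>y\<in>X. \<forall>z\<in>X. d x z \<le> d x y + d y z)"

definition weighting :: "'a set \<Rightarrow> ('a \<Rightarrow> 'a \<Rightarrow> real) \<Rightarrow> ('a \<Rightarrow> real) \<Rightarrow> bool" where
  "weighting X d w \<longleftrightarrow> (\<forall>x\<in>X. (\<Sum>y\<in>X. exp (- d x y) * w y) = 1)"

definition has_weighting :: "'a set \<Rightarrow> ('a \<Rightarrow> 'a \<Rightarrow> real) \<Rightarrow> bool" where
  "has_weighting X d \<longleftrightarrow> (\<exists>w. weighting X d w)"

definition magnitude :: "'a set \<Rightarrow> ('a \<Rightarrow> 'a \<Rightarrow> real) \<Rightarrow> real" where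
  "magnitude X d = (\<Sum>x\<in>X. (SOME w. weighting X d w) x)"

definition correspondences :: "'a set \<Rightarrow> 'b set \<Rightarrow> ('a \<times> 'b) set set" where
  "correspondences X Y = {R. R \<subseteq> X \<times> Y \<and> fst ` R = X \<and> snd ` R = Y}"

definition distortion :: "('a \<Rightarrow> 'a \<Rightarrow> real) \<Rightarrow> ('b \<Rightarrow> 'b \<Rightarrow> real) \<Rightarrow> ('a \<times> 'b) set \<Rightarrow> real" where
  "distortion dX dY R = (SUP pq \<in> R \<times> R. \<bar>dX (fst (fst pq)) (fst (snd pq)) - dY (snd (fst pq)) (snd (snd pq))\<bar>)"

definition gh_dist :: "'a set \<Rightarrow> ('a \<Rightarrow> 'a \<Rightarrow> real) \<Rightarrow> 'b set \<Rightarrow> ('b \<Rightarrow> 'b \<Rightarrow> real) \<Rightarrow> real" where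
  "gh_dist X dX Y dY = (1/2) * (INF R \<in> correspondences X Y. distortion dX dY R)"

definition fmet_path :: "(real \<Rightarrow> 'a set) \<Rightarrow> (real \<Rightarrow> 'a \<Rightarrow> 'a \<Rightarrow> real) \<Rightarrow> bool" where
  "fmet_path X d \<longleftrightarrow> (\<exists>\<epsilon>>0. \<forall>t\<in>{0<..<\<epsilon>}. finite_metric (X t) (d t))"

definition gh_tendsto :: "(real \<Rightarrow> 'a set) \<Rightarrow> (real \<Rightarrow> 'a \<Rightarrow> 'a \<Rightarrow> real) \<Rightarrow> 'b set \<Rightarrow> ('b \<Rightarrow> 'b \<Rightarrow> real) \<Rightarrow> bool" where
  "gh_tendsto X d Y dY \<longleftrightarrow> (\<forall>\<^sub>F t in at_right 0. X t \<noteq> {}) \<and>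
     ((\<lambda>t. gh_dist (X t) (d t) Y dY) \<longlongrightarrow> 0) (at_right 0)"

definition K2_dist :: "bool \<Rightarrow> bool \<Rightarrow> real" where
  "K2_dist x y = (if x = y then 0 else 1)"

definition fX_at :: "(real \<Rightarrow> 'a set) \<Rightarrow> (real \<Rightarrow> 'a \<Rightarrow> 'a \<Rightarrow> real) \<Rightarrow> real \<Rightarrow> real \<Rightarrow> bool" where
  "fX_at X d s v \<longleftrightarrow> (\<forall>\<^sub>F t in at_right 0. has_weighting (X t) (\<lambda>x y. s * d t x y)) \<and>
     ((\<lambda>t. magnitude (X t) (\<lambda>x y. s * d t x y)) \<longlongrightarrow> v) (at_right 0)"

end

theory Submission
  imports Defs "HOL-Real_Asymp.Real_Asymp"
begin

definition c0 :: "nat \<Rightarrow> nat \<Rightarrow> bool" where "c0 n k = (k < n+2)"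
definition isP :: "nat \<Rightarrow> nat \<Rightarrow> bool" where "isP n k = (k < 2 \<or> (n+2 \<le> k \<and> k < n+4))"
definition Xc :: "nat \<Rightarrow> nat set" where "Xc n = {0..<2*n+4}"
definition dd :: "nat \<Rightarrow> real \<Rightarrow> real \<Rightarrow> real \<Rightarrow> real \<Rightarrow> real \<Rightarrow> nat \<Rightarrow> nat \<Rightarrow> real" where
 "dd n a b p q t x y = (if x = y then 0 else if c0 n x = c0 n y then
     (if isP n x \<and> isP n y then a*t else if \<not> isP n x \<and> \<not> isP n y then b*t else t + p*t^2)
   else (if isP n x = isP n y then 1 else 1 + q*t^2))"

lemma fm_core:
  fixes a b p q t :: real
  assumes t: "0<t" and a: "0<a" and b: "0<b"
   and h1: "0 < 2 - a + 2*p*t" and h2: "0 < 2 - b + 2*p*t" and h3: "0 < 1 + p*t"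
   and h4: "0 < 1 + q*t^2" and h5: "0 < a - \<bar>q\<bar>*t" and h6: "0 < b - \<bar>q\<bar>*t"
   and h7: "0 < 1 + p*t - \<bar>q\<bar>*t" and h8: "0 < 2 - 2*\<bar>q\<bar>*t^2 - a*t"
   and h9: "0 < 2 - 2*\<bar>q\<bar>*t^2 - b*t" and h10: "0 < 2 - 2*\<bar>q\<bar>*t^2 - t - p*t^2"
  shows "finite_metric (Xc n) (dd n a b p q t)"
proof -
  have g1: "a*t \<le> 2*(t+p*t^2)" using mult_pos_pos[OF t h1] by (simp add: algebra_simps power2_eq_square)
  have g2: "b*t \<le> 2*(t+p*t^2)" using mult_pos_pos[OF t h2] by (simp add: algebra_simps power2_eq_square)
  have g3: "0 < t+p*t^2" using mult_pos_pos[OF t h3] by (simp add: algebra_simps power2_eq_square)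
  have g5: "\<bar>q\<bar>*t^2 \<le> a*t" using mult_pos_pos[OF t h5] by (simp add: algebra_simps power2_eq_square)
  have g6: "\<bar>q\<bar>*t^2 \<le> b*t" using mult_pos_pos[OF t h6] by (simp add: algebra_simps power2_eq_square)
  have g7: "\<bar>q\<bar>*t^2 \<le> t+p*t^2" using mult_pos_pos[OF t h7] by (simp add: algebra_simps power2_eq_square)
  have at: "0 < a*t" "0 < b*t" using a b t by auto
  have qq: "- \<bar>q\<bar>*t^2 \<le> q*t^2" "q*t^2 \<le> \<bar>q\<bar>*t^2"
    by (auto intro!: mult_right_mono simp: abs_if mult_nonpos_nonneg)
  show ?thesis
    unfolding finite_metric_def
  proof (intro conjI ballI)
    show "finite (Xc n)" by (simp add: Xc_def)
  next
    fix x y assume "x \<in> Xc n" "y \<in> Xc n"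
    show "(dd n a b p q t x y = 0) = (x = y)" using at g3 h4 by (auto simp: dd_def)
    show "dd n a b p q t x y = dd n a b p q t y x" by (auto simp: dd_def)
  next
    fix x y z assume "x \<in> Xc n" "y \<in> Xc n" "z \<in> Xc n"
    show "dd n a b p q t x z \<le> dd n a b p q t x y + dd n a b p q t y z"
      using g1 g2 g3 g5 g6 g7 at h4 h8 h9 h10 qq unfolding dd_def
      by (auto split: if_splits)
  qed
qed
lemma evpos: "((f::real\<Rightarrow>real) \<longlongrightarrow> l) F \<Longrightarrow> 0 < l \<Longrightarrow> eventually (\<lambda>t. 0 < f t) F"
  by (rule order_tendstoD(1))

lemma fmet:
  fixes a b p q :: real
  assumes a: "0<a" "a<2" and b: "0<b" "b<2"
  shows "fmet_path (\<lambda>t. Xc n) (\<lambda>t. dd n a b p q t)"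
proof -
  have "\<forall>\<^sub>F t in at_right (0::real). 0 < t" by (rule eventually_at_right_less)
  moreover have "\<forall>\<^sub>F t in at_right (0::real). 0 < 2 - a + 2*p*t"
    using a by (intro evpos[where l="2-a"]) (real_asymp, simp)
  moreover have "\<forall>\<^sub>F t in at_right (0::real). 0 < 2 - b + 2*p*t"
    using b by (intro evpos[where l="2-b"]) (real_asymp, simp)
  moreover have "\<forall>\<^sub>F t in at_right (0::real). 0 < 1 + p*t"
    by (intro evpos[where l="1"]) (real_asymp, simp)
  moreover have "\<forall>\<^sub>F t in at_right (0::real). 0 < 1 + q*t^2"
    by (intro evpos[where l="1"]) (real_asymp, simp)
  moreover have "\<forall>\<^sub>F t in at_right (0::real). 0 < a - \<bar>q\<bar>*t"
    using a by (intro evpos[where l="a"]) (real_asymp, simp)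
  moreover have "\<forall>\<^sub>F t in at_right (0::real). 0 < b - \<bar>q\<bar>*t"
    using b by (intro evpos[where l="b"]) (real_asymp, simp)
  moreover have "\<forall>\<^sub>F t in at_right (0::real). 0 < 1 + p*t - \<bar>q\<bar>*t"
    by (intro evpos[where l="1"]) (real_asymp, simp)
  moreover have "\<forall>\<^sub>F t in at_right (0::real). 0 < 2 - 2*\<bar>q\<bar>*t^2 - a*t"
    by (intro evpos[where l="2"]) (real_asymp, simp)
  moreover have "\<forall>\<^sub>F t in at_right (0::real). 0 < 2 - 2*\<bar>q\<bar>*t^2 - b*t"
    by (intro evpos[where l="2"]) (real_asymp, simp)
  moreover have "\<forall>\<^sub>F t in at_right (0::real). 0 < 2 - 2*\<bar>q\<bar>*t^2 - t - p*t^2"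
    by (intro evpos[where l="2"]) (real_asymp, simp)
  ultimately have "\<forall>\<^sub>F t in at_right (0::real). finite_metric (Xc n) (dd n a b p q t)"
    by eventually_elim (rule fm_core, use a b in auto)
  then obtain e where e: "e > 0" "\<forall>t>0. t < e \<longrightarrow> finite_metric (Xc n) (dd n a b p q t)"
    unfolding eventually_at_right_field by auto
  then show ?thesis unfolding fmet_path_def by (intro exI[of _ e]) auto
qed

lemma gh_nonneg:
  assumes "finite X" "X \<noteq> {}"
  shows "0 \<le> gh_dist X dX (UNIV::bool set) dY"
proof -
  have ne: "X \<times> UNIV \<in> correspondences X (UNIV::bool set)"
    using assms(2) unfolding correspondences_def by auto
  have "0 \<le> distortion dX dY R" if R: "R \<in> correspondences X (UNIV::bool set)" for R
  proof -
    from R have sub: "R \<subseteq> X \<times> UNIV" and fR: "fst ` R = X" unfolding correspondences_def by auto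
    have fin: "finite R" by (rule finite_subset[OF sub]) (simp add: assms(1))
    from fR assms(2) obtain r where r: "r \<in> R" by auto
    have "0 \<le> \<bar>dX (fst (fst (r,r))) (fst (snd (r,r))) - dY (snd (fst (r,r))) (snd (snd (r,r)))\<bar>" by simp
    also have "\<dots> \<le> distortion dX dY R" unfolding distortion_def
      by (rule cSUP_upper) (use r fin in \<open>auto intro!: bdd_above_finite\<close>)
    finally show ?thesis .
  qed
  then show ?thesis unfolding gh_dist_def
    using ne by (intro mult_nonneg_nonneg cINF_greatest) auto
qed

lemma gh_upper:
  assumes "finite X" "X \<noteq> {}" "R \<in> correspondences X (UNIV::bool set)"
  shows "gh_dist X dX (UNIV::bool set) dY \<le> (1/2) * distortion dX dY R"
proof -
  have ne: "X \<times> UNIV \<in> correspondences X (UNIV::bool set)"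
    using assms(2) unfolding correspondences_def by auto
  have "0 \<le> distortion dX dY R" if R: "R \<in> correspondences X (UNIV::bool set)" for R
  proof -
    from R have sub: "R \<subseteq> X \<times> UNIV" and fR: "fst ` R = X" unfolding correspondences_def by auto
    have fin: "finite R" by (rule finite_subset[OF sub]) (simp add: assms(1))
    from fR assms(2) obtain r where r: "r \<in> R" by auto
    have "0 \<le> \<bar>dX (fst (fst (r,r))) (fst (snd (r,r))) - dY (snd (fst (r,r))) (snd (snd (r,r)))\<bar>" by simp
    also have "\<dots> \<le> distortion dX dY R" unfolding distortion_def
      by (rule cSUP_upper) (use r fin in \<open>auto intro!: bdd_above_finite\<close>)
    finally show ?thesis .
  qed
  then have "bdd_below (distortion dX dY ` correspondences X (UNIV::bool set))"
    by (auto intro!: bdd_belowI[of _ 0])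
  then show ?thesis unfolding gh_dist_def
    by (intro mult_left_mono cINF_lower assms(3)) auto
qed

lemma dist_bound:
  fixes a b p q t :: real
  assumes "0<a" "0<b" "0<t" "t\<le>1"
  shows "\<bar>dd n a b p q t x y - K2_dist (c0 n x) (c0 n y)\<bar> \<le> (a+b+1+\<bar>p\<bar>+\<bar>q\<bar>)*t"
proof -
  have t2: "t^2 \<le> t" using assms by (simp add: power2_eq_square mult_left_le)
  have mem: "dd n a b p q t x y - K2_dist (c0 n x) (c0 n y) \<in> {0, a*t, b*t, t+p*t^2, q*t^2}"
    unfolding dd_def K2_dist_def by auto
  have b1: "\<bar>t+p*t^2\<bar> \<le> t + \<bar>p\<bar>*t"
  proof -
    have "\<bar>t+p*t^2\<bar> \<le> \<bar>t\<bar> + \<bar>p*t^2\<bar>" by (rule abs_triangle_ineq)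
    also have "\<bar>p*t^2\<bar> = \<bar>p\<bar>*t^2" by (simp add: abs_mult)
    also have "\<bar>p\<bar>*t^2 \<le> \<bar>p\<bar>*t" using t2 by (intro mult_left_mono) auto
    finally show ?thesis using assms by simp
  qed
  have b2: "\<bar>q*t^2\<bar> \<le> \<bar>q\<bar>*t"
    using t2 by (simp add: abs_mult mult_left_mono)
  have pos: "0 \<le> a*t" "0 \<le> b*t" "0 \<le> \<bar>p\<bar>*t" "0 \<le> \<bar>q\<bar>*t" using assms by auto
  have e: "(a+b+1+\<bar>p\<bar>+\<bar>q\<bar>)*t = a*t + b*t + t + \<bar>p\<bar>*t + \<bar>q\<bar>*t" by (simp add: algebra_simps)
  have "\<bar>v\<bar> \<le> a*t + b*t + t + \<bar>p\<bar>*t + \<bar>q\<bar>*t" if "v \<in> {0, a*t, b*t, t+p*t^2, q*t^2}" for v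
    using that b1 b2 pos by (elim insertE emptyE; hypsubst; linarith)
  from this[OF mem] show ?thesis unfolding e .
qed

lemma ghconv:
  fixes a b p q :: real
  assumes "0<a" "0<b"
  shows "gh_tendsto (\<lambda>t. Xc n) (\<lambda>t. dd n a b p q t) (UNIV::bool set) K2_dist"
proof -
  define R0 where "R0 = (\<lambda>x. (x, c0 n x)) ` Xc n"
  have fin: "finite (Xc n)" and ne: "Xc n \<noteq> {}" by (auto simp: Xc_def)
  have "True = c0 n 0" "False = c0 n (n+2)" "0 \<in> Xc n" "n+2 \<in> Xc n" by (auto simp: c0_def Xc_def)
  then have "snd ` R0 = UNIV" unfolding R0_def by (auto simp: image_image)
  then have R0: "R0 \<in> correspondences (Xc n) (UNIV::bool set)"
    unfolding correspondences_def R0_def by (auto simp: image_image)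
  define C where "C = a+b+1+\<bar>p\<bar>+\<bar>q\<bar>"
  have dist: "distortion (dd n a b p q t) K2_dist R0 \<le> C*t" if t: "0<t" "t\<le>1" for t
    unfolding distortion_def
  proof (rule cSUP_least)
    show "R0 \<times> R0 \<noteq> {}" using ne unfolding R0_def by auto
  next
    fix pq assume "pq \<in> R0 \<times> R0"
    then obtain x y where "pq = ((x, c0 n x), (y, c0 n y))" unfolding R0_def by auto
    then show "\<bar>dd n a b p q t (fst (fst pq)) (fst (snd pq)) - K2_dist (snd (fst pq)) (snd (snd pq))\<bar> \<le> C*t"
      using dist_bound[OF assms t] unfolding C_def by simp
  qed
  have ev: "\<forall>\<^sub>F t in at_right (0::real). 0 < t \<and> t \<le> 1"
    using eventually_at_right_field[of "\<lambda>t. 0 < t \<and> t \<le> (1::real)" 0]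
    by (auto intro!: exI[of _ 1])
  have "((\<lambda>t. gh_dist (Xc n) (dd n a b p q t) (UNIV::bool set) K2_dist) \<longlongrightarrow> 0) (at_right 0)"
  proof (rule tendsto_sandwich[where f="\<lambda>t. 0" and h="\<lambda>t. (1/2)*(C*t)"])
    show "\<forall>\<^sub>F t in at_right 0. 0 \<le> gh_dist (Xc n) (dd n a b p q t) (UNIV::bool set) K2_dist"
      by (rule always_eventually) (simp add: gh_nonneg[OF fin ne])
    show "\<forall>\<^sub>F t in at_right 0. gh_dist (Xc n) (dd n a b p q t) (UNIV::bool set) K2_dist \<le> (1/2)*(C*t)"
      using ev
    proof eventually_elim
      case (elim t)
      then show ?case using gh_upper[OF fin ne R0, of "dd n a b p q t" K2_dist] dist[of t] by simp
    qed
    show "((\<lambda>t. 0) \<longlongrightarrow> (0::real)) (at_right 0)" by simp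
    show "((\<lambda>t. (1/2)*(C*t)) \<longlongrightarrow> (0::real)) (at_right 0)" by real_asymp
  qed
  then show ?thesis unfolding gh_tendsto_def using ne by simp
qed

lemma mag_eq:
  assumes fin: "finite X" and sym: "\<forall>x\<in>X. \<forall>y\<in>X. d x y = d y x" and w: "weighting X d w"
  shows "magnitude X d = sum w X"
proof -
  define w' where "w' = (SOME w. weighting X d w)"
  have w': "weighting X d w'" unfolding w'_def by (rule someI[of "weighting X d" w, OF w])
  have "sum w' X = (\<Sum>x\<in>X. w' x * (\<Sum>y\<in>X. exp (- d x y) * w y))"
    using w unfolding weighting_def by simp
  also have "\<dots> = (\<Sum>x\<in>X. \<Sum>y\<in>X. w' x * exp (- d x y) * w y)"
    by (simp add: sum_distrib_left mult.assoc)
  also have "\<dots> = (\<Sum>y\<in>X. \<Sum>x\<in>X. w' x * exp (- d x y) * w y)"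
    by (rule sum.swap)
  also have "\<dots> = (\<Sum>y\<in>X. w y * (\<Sum>x\<in>X. exp (- d y x) * w' x))"
    by (intro sum.cong refl) (auto simp: sum_distrib_left sym mult.commute mult.left_commute)
  also have "\<dots> = sum w X"
    using w' unfolding weighting_def by simp
  finally show ?thesis unfolding magnitude_def w'_def by simp
qed

lemma sum_ivl_const:
  "(\<And>y. l \<le> y \<Longrightarrow> y < h \<Longrightarrow> f y = c) \<Longrightarrow> sum f {l..<h} = real (h - l) * (c::real)"
  by (simp add: sum.cong[of "{l..<h}" "{l..<h}" f "\<lambda>_. c"])

lemma sum_ivl_x:
  assumes "l \<le> x" "x < h" "f x = \<alpha>" "\<And>y. l \<le> y \<Longrightarrow> y < h \<Longrightarrow> y \<noteq> x \<Longrightarrow> f y = c"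
  shows "sum f {l..<h} = \<alpha> + real (h - l - 1) * (c::real)"
proof -
  have "sum f {l..<h} = f x + sum f ({l..<h} - {x})"
    using assms(1,2) by (simp add: sum.remove)
  also have "sum f ({l..<h} - {x}) = sum (\<lambda>_. c) ({l..<h} - {x})"
    using assms(4) by (intro sum.cong) auto
  also have "\<dots> = real (h - l - 1) * c" using assms(1,2) by simp
  finally show ?thesis using assms(3) by simp
qed

lemma split4: "n1 \<le> n2 \<Longrightarrow> n2 \<le> n3 \<Longrightarrow> n3 \<le> n4 \<Longrightarrow> n4 \<le> n5 \<Longrightarrow>
  sum (f::nat\<Rightarrow>real) {n1..<n5} = sum f {n1..<n2} + sum f {n2..<n3} + sum f {n3..<n4} + sum f {n4..<n5}"
  by (simp add: sum.atLeastLessThan_concat)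

definition "eA (n::nat) a (b::real) (p::real) (q::real) s t = exp (-(s*(a*t)))"
definition "eB (n::nat) (a::real) b (p::real) (q::real) s t = exp (-(s*(b*t)))"
definition "eC (n::nat) (a::real) (b::real) p (q::real) s t = exp (-(s*(t+p*t^2)))"
definition "eU (n::nat) (a::real) (b::real) (p::real) (q::real) s (t::real) = exp (-s)"
definition "eR (n::nat) (a::real) (b::real) (p::real) q s t = exp (-(s*(1+q*t^2)))"
definition "M11 n a b p q s t = 1 + eA n a b p q s t + 2*eU n a b p q s t"
definition "M12 n a b p q s t = real n * (eC n a b p q s t + eR n a b p q s t)"
definition "M21 n a b p q s t = 2 * (eC n a b p q s t + eR n a b p q s t)"
definition "M22 n a b p q s t = 1 + (real n - 1)*eB n a b p q s t + real n * eU n a b p q s t"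
definition "Det n a b p q s t = M11 n a b p q s t*M22 n a b p q s t - M12 n a b p q s t*M21 n a b p q s t"
definition "xw n a b p q s t = (M22 n a b p q s t - M12 n a b p q s t)/Det n a b p q s t"
definition "yw n a b p q s t = (M11 n a b p q s t - M21 n a b p q s t)/Det n a b p q s t"
definition "ww n a b p q s t k = (if isP n k then xw n a b p q s t else yw n a b p q s t)"

lemma weighting_fam:
  assumes n: "n \<ge> 1" and D: "Det n a b p q s t \<noteq> 0"
  shows "weighting (Xc n) (\<lambda>x y. s * dd n a b p q t x y) (ww n a b p q s t)"
  unfolding weighting_def
proof
  fix x assume x: "x \<in> Xc n"
  let ?f = "\<lambda>y. exp (- (s * dd n a b p q t x y)) * ww n a b p q s t y"
  let ?xw = "xw n a b p q s t" and ?yw = "yw n a b p q s t"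
  have sp: "sum ?f {0..<2*n+4} = sum ?f {0..<2} + sum ?f {2..<n+2} + sum ?f {n+2..<n+4} + sum ?f {n+4..<2*n+4}"
    by (rule split4) auto
  have eqP: "?xw * M11 n a b p q s t + ?yw * M12 n a b p q s t = 1"
  proof -
    have "?xw * M11 n a b p q s t + ?yw * M12 n a b p q s t =
      ((M22 n a b p q s t - M12 n a b p q s t) * M11 n a b p q s t + (M11 n a b p q s t - M21 n a b p q s t) * M12 n a b p q s t) / Det n a b p q s t"
      unfolding xw_def yw_def by (simp add: add_divide_distrib)
    also have "(M22 n a b p q s t - M12 n a b p q s t) * M11 n a b p q s t + (M11 n a b p q s t - M21 n a b p q s t) * M12 n a b p q s t = Det n a b p q s t"
      unfolding Det_def by (simp add: algebra_simps)
    finally show ?thesis using D by simp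
  qed
  have eqQ: "?xw * M21 n a b p q s t + ?yw * M22 n a b p q s t = 1"
  proof -
    have "?xw * M21 n a b p q s t + ?yw * M22 n a b p q s t =
      ((M22 n a b p q s t - M12 n a b p q s t) * M21 n a b p q s t + (M11 n a b p q s t - M21 n a b p q s t) * M22 n a b p q s t) / Det n a b p q s t"
      unfolding xw_def yw_def by (simp add: add_divide_distrib)
    also have "(M22 n a b p q s t - M12 n a b p q s t) * M21 n a b p q s t + (M11 n a b p q s t - M21 n a b p q s t) * M22 n a b p q s t = Det n a b p q s t"
      unfolding Det_def by (simp add: algebra_simps)
    finally show ?thesis using D by simp
  qed
  consider "x < 2" | "2 \<le> x" "x < n+2" | "n+2 \<le> x" "x < n+4" | "n+4 \<le> x" "x < 2*n+4"
    using x unfolding Xc_def by force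
  then have "sum ?f {0..<2*n+4} = 1"
  proof cases
    case 1
    have "sum ?f {0..<2} = ?xw + real (2-0-1) * (eA n a b p q s t * ?xw)"
      by (rule sum_ivl_x[of 0 x]) (use 1 in \<open>auto simp: dd_def c0_def isP_def ww_def eA_def\<close>)
    moreover have "sum ?f {2..<n+2} = real (n+2-2) * (eC n a b p q s t * ?yw)"
      by (rule sum_ivl_const) (use 1 in \<open>auto simp: dd_def c0_def isP_def ww_def eC_def\<close>)
    moreover have "sum ?f {n+2..<n+4} = real (n+4-(n+2)) * (eU n a b p q s t * ?xw)"
      by (rule sum_ivl_const) (use 1 in \<open>auto simp: dd_def c0_def isP_def ww_def eU_def\<close>)
    moreover have "sum ?f {n+4..<2*n+4} = real (2*n+4-(n+4)) * (eR n a b p q s t * ?yw)"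
      by (rule sum_ivl_const) (use 1 in \<open>auto simp: dd_def c0_def isP_def ww_def eR_def\<close>)
    ultimately show ?thesis using sp eqP unfolding M11_def M12_def by (simp add: algebra_simps)
  next
    case 2
    have "sum ?f {0..<2} = real (2-0) * (eC n a b p q s t * ?xw)"
      by (rule sum_ivl_const) (use 2 in \<open>auto simp: dd_def c0_def isP_def ww_def eC_def\<close>)
    moreover have "sum ?f {2..<n+2} = ?yw + real (n+2-2-1) * (eB n a b p q s t * ?yw)"
      by (rule sum_ivl_x[of 2 x]) (use 2 in \<open>auto simp: dd_def c0_def isP_def ww_def eB_def\<close>)
    moreover have "sum ?f {n+2..<n+4} = real (n+4-(n+2)) * (eR n a b p q s t * ?xw)"
      by (rule sum_ivl_const) (use 2 in \<open>auto simp: dd_def c0_def isP_def ww_def eR_def\<close>)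
    moreover have "sum ?f {n+4..<2*n+4} = real (2*n+4-(n+4)) * (eU n a b p q s t * ?yw)"
      by (rule sum_ivl_const) (use 2 in \<open>auto simp: dd_def c0_def isP_def ww_def eU_def\<close>)
    ultimately show ?thesis using sp eqQ n unfolding M21_def M22_def by (simp add: algebra_simps of_nat_diff)
  next
    case 3
    have "sum ?f {0..<2} = real (2-0) * (eU n a b p q s t * ?xw)"
      by (rule sum_ivl_const) (use 3 in \<open>auto simp: dd_def c0_def isP_def ww_def eU_def\<close>)
    moreover have "sum ?f {2..<n+2} = real (n+2-2) * (eR n a b p q s t * ?yw)"
      by (rule sum_ivl_const) (use 3 in \<open>auto simp: dd_def c0_def isP_def ww_def eR_def\<close>)
    moreover have "sum ?f {n+2..<n+4} = ?xw + real (n+4-(n+2)-1) * (eA n a b p q s t * ?xw)"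
      by (rule sum_ivl_x[of "n+2" x]) (use 3 in \<open>auto simp: dd_def c0_def isP_def ww_def eA_def\<close>)
    moreover have "sum ?f {n+4..<2*n+4} = real (2*n+4-(n+4)) * (eC n a b p q s t * ?yw)"
      by (rule sum_ivl_const) (use 3 in \<open>auto simp: dd_def c0_def isP_def ww_def eC_def\<close>)
    ultimately show ?thesis using sp eqP unfolding M11_def M12_def by (simp add: algebra_simps)
  next
    case 4
    have "sum ?f {0..<2} = real (2-0) * (eR n a b p q s t * ?xw)"
      by (rule sum_ivl_const) (use 4 in \<open>auto simp: dd_def c0_def isP_def ww_def eR_def\<close>)
    moreover have "sum ?f {2..<n+2} = real (n+2-2) * (eU n a b p q s t * ?yw)"
      by (rule sum_ivl_const) (use 4 in \<open>auto simp: dd_def c0_def isP_def ww_def eU_def\<close>)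
    moreover have "sum ?f {n+2..<n+4} = real (n+4-(n+2)) * (eC n a b p q s t * ?xw)"
      by (rule sum_ivl_const) (use 4 in \<open>auto simp: dd_def c0_def isP_def ww_def eC_def\<close>)
    moreover have "sum ?f {n+4..<2*n+4} = ?yw + real (2*n+4-(n+4)-1) * (eB n a b p q s t * ?yw)"
      by (rule sum_ivl_x[of "n+4" x]) (use 4 in \<open>auto simp: dd_def c0_def isP_def ww_def eB_def\<close>)
    ultimately show ?thesis using sp eqQ n unfolding M21_def M22_def by (simp add: algebra_simps of_nat_diff)
  qed
  then show "(\<Sum>y\<in>Xc n. exp (- (s * dd n a b p q t x y)) * ww n a b p q s t y) = 1"
    unfolding Xc_def by simp
qed

lemma dd_sym: "dd n a b p q t x y = dd n a b p q t y x"
  by (auto simp: dd_def)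

definition "Num n a b p q s t = 2*(M22 n a b p q s t - M12 n a b p q s t) + real n * (M11 n a b p q s t - M21 n a b p q s t)"

lemma magnitude_fam:
  assumes n: "n \<ge> 1" and D: "Det n a b p q s t \<noteq> 0"
  shows "magnitude (Xc n) (\<lambda>x y. s * dd n a b p q t x y) = 2 * Num n a b p q s t / Det n a b p q s t"
proof -
  have "magnitude (Xc n) (\<lambda>x y. s * dd n a b p q t x y) = sum (ww n a b p q s t) (Xc n)"
    by (rule mag_eq[OF _ _ weighting_fam[OF n D]]) (auto simp: Xc_def dd_sym)
  also have "\<dots> = sum (ww n a b p q s t) {0..<2} + sum (ww n a b p q s t) {2..<n+2} +
       sum (ww n a b p q s t) {n+2..<n+4} + sum (ww n a b p q s t) {n+4..<2*n+4}"
    unfolding Xc_def by (rule split4) auto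
  also have "\<dots> = 2 * xw n a b p q s t + real n * yw n a b p q s t + 2 * xw n a b p q s t + real n * yw n a b p q s t"
    by (subst sum_ivl_const[where c="xw n a b p q s t"] sum_ivl_const[where c="yw n a b p q s t"],
        auto simp: ww_def isP_def)+
  also have "\<dots> = 2 * Num n a b p q s t / Det n a b p q s t"
    unfolding xw_def yw_def Num_def by (simp add: add_divide_distrib[symmetric] diff_divide_distrib[symmetric] algebra_simps)
  finally show ?thesis .
qed

lemma Num_id: "Num n a b p q s t = 4*real n*((1 - eC n a b p q s t) + (eU n a b p q s t - eR n a b p q s t))
   - 2*(real n - 1)*(1 - eB n a b p q s t) - real n * (1 - eA n a b p q s t)"
  unfolding Num_def M11_def M12_def M21_def M22_def by (simp add: algebra_simps)

lemma Det_id: "Det n a b p q s t = (1 + eU n a b p q s t) * Num n a b p q s t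
   + (real n - 1) * (1 - eA n a b p q s t) * (1 - eB n a b p q s t)
   - 2*real n*((1 - eC n a b p q s t) + (eU n a b p q s t - eR n a b p q s t))^2"
  unfolding Num_def Det_def M11_def M12_def M21_def M22_def by (simp add: algebra_simps power2_eq_square)

definition NL :: "nat \<Rightarrow> real \<Rightarrow> real \<Rightarrow> real \<Rightarrow> real \<Rightarrow> real \<Rightarrow> real" where
  "NL n a b p q s = 4 * real n * ((s * p - s^2 / 2) + exp (- s) * s * q) + (real n - 1) * s^2 * b^2 + real n * s^2 * a^2 / 2"
definition "DL n a b p q s = (1 + exp(-s))*NL n a b p q s + s^2*((real n - 1)*a*b - 2*real n)"

lemma fX_fam:
  assumes n: "n \<ge> 1" and cons: "4 * real n = 2 * (real n - 1) * b + real n  *  a"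
    and DL: "DL n a b p q s \<noteq> 0"
  shows "fX_at (\<lambda>t. Xc n) (\<lambda>t. dd n a b p q t) s (2  *  NL n a b p q s / DL n a b p q s)"
proof -
  let ?A = "\<lambda>t. eA n a b p q s t" and ?B = "\<lambda>t. eB n a b p q s t" and ?C = "\<lambda>t. eC n a b p q s t"
    and ?U = "\<lambda>t. eU n a b p q s t" and ?R = "\<lambda>t. eR n a b p q s t"
  have lA: "((\<lambda>t. (1 - ?A t)/t) \<longlongrightarrow> s * a) (at_right 0)"
    unfolding eA_def by real_asymp
  have lB: "((\<lambda>t. (1 - ?B t)/t) \<longlongrightarrow> s * b) (at_right 0)"
    unfolding eB_def by real_asymp
  have lCR: "((\<lambda>t. ((1 - ?C t) + (?U t - ?R t))/t) \<longlongrightarrow> s) (at_right 0)"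
    unfolding eC_def eU_def eR_def by real_asymp
  have qA: "((\<lambda>t. ((1 - ?A t) - s * a * t)/t^2) \<longlongrightarrow> -(s * a) * (s * a)/2) (at_right 0)"
    unfolding eA_def by real_asymp
  have qB: "((\<lambda>t. ((1 - ?B t) - s * b * t)/t^2) \<longlongrightarrow> -(s * b) * (s * b)/2) (at_right 0)"
    unfolding eB_def by real_asymp
  have qC: "((\<lambda>t. ((1 - ?C t) - s * t)/t^2) \<longlongrightarrow> s * p - s * s/2) (at_right 0)"
    unfolding eC_def by real_asymp
  have qR: "((\<lambda>t. (?U t - ?R t)/t^2) \<longlongrightarrow> exp(-s) * s * q) (at_right 0)"
    unfolding eU_def eR_def by real_asymp
  have numeq: "Num n a b p q s t / t^2 = 4 * real n * (((1 - ?C t) - s * t)/t^2 + (?U t - ?R t)/t^2)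
      - 2 * (real n - 1) * (((1 - ?B t) - s * b * t)/t^2) - real n * (((1 - ?A t) - s * a * t)/t^2)" if t: "t \<noteq> 0" for t
  proof -
    have "Num n a b p q s t = 4 * real n * (((1 - ?C t) - s * t) + (?U t - ?R t))
      - 2 * (real n - 1) * (((1 - ?B t) - s * b * t)) - real n * (((1 - ?A t) - s * a * t)) + s * t * (4 * real n - 2 * (real n - 1) * b - real n  *  a)"
      unfolding Num_id by (simp add: algebra_simps)
    also have "s * t * (4 * real n - 2 * (real n - 1) * b - real n  *  a) = 0" using cons by simp
    finally have eq: "Num n a b p q s t = 4 * real n * (((1 - ?C t) - s * t) + (?U t - ?R t))
      - 2 * (real n - 1) * (((1 - ?B t) - s * b * t)) - real n * (((1 - ?A t) - s * a * t))" by simp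
    show ?thesis unfolding eq using t by (simp add: field_simps)
  qed
  have lNum: "((\<lambda>t. Num n a b p q s t / t^2) \<longlongrightarrow> NL n a b p q s) (at_right 0)"
  proof -
    have "((\<lambda>t. 4 * real n * (((1 - ?C t) - s * t)/t^2 + (?U t - ?R t)/t^2)
      - 2 * (real n - 1) * (((1 - ?B t) - s * b * t)/t^2) - real n * (((1 - ?A t) - s * a * t)/t^2)) \<longlongrightarrow>
      4 * real n * ((s * p - s * s/2) + exp(-s) * s * q) - 2 * (real n - 1) * (-(s * b) * (s * b)/2) - real n * (-(s * a) * (s * a)/2)) (at_right 0)"
      by (intro tendsto_intros qA qB qC qR)
    also have "4 * real n * ((s * p - s * s/2) + exp(-s) * s * q) - 2 * (real n - 1) * (-(s * b) * (s * b)/2) - real n * (-(s * a) * (s * a)/2) = NL n a b p q s"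
      unfolding NL_def by (simp add: field_simps power2_eq_square)
    finally show ?thesis
      by (rule Lim_transform_eventually) (auto simp: eventually_at_filter numeq)
  qed
  have deteq: "Det n a b p q s t / t^2 = (1 + ?U t)  *  (Num n a b p q s t / t^2)
      + (real n - 1)  *  ((1 - ?A t)/t)  *  ((1 - ?B t)/t) - 2 * real n * (((1 - ?C t) + (?U t - ?R t))/t)^2"
    if t: "t \<noteq> 0" for t
    unfolding Det_id using t by (simp add: field_simps power2_eq_square)
  have lU: "((\<lambda>t. ?U t) \<longlongrightarrow> exp(-s)) (at_right 0)" unfolding eU_def by simp
  have lDet: "((\<lambda>t. Det n a b p q s t / t^2) \<longlongrightarrow> DL n a b p q s) (at_right 0)"
  proof -
    have "((\<lambda>t. (1 + ?U t)  *  (Num n a b p q s t / t^2)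
      + (real n - 1)  *  ((1 - ?A t)/t)  *  ((1 - ?B t)/t) - 2 * real n * (((1 - ?C t) + (?U t - ?R t))/t)^2) \<longlongrightarrow>
      (1 + exp(-s))  *  NL n a b p q s + (real n - 1) * (s * a) * (s * b) - 2 * real n * s^2) (at_right 0)"
      by (intro tendsto_intros lU lNum lA lB lCR)
    also have "(1 + exp(-s))  *  NL n a b p q s + (real n - 1) * (s * a) * (s * b) - 2 * real n * s^2 = DL n a b p q s"
      unfolding DL_def by (simp add: algebra_simps power2_eq_square)
    finally show ?thesis
      by (rule Lim_transform_eventually) (auto simp: eventually_at_filter deteq)
  qed
  have evD: "\<forall>\<^sub>F t in at_right 0. Det n a b p q s t / t^2 \<noteq> 0"
    by (rule tendsto_imp_eventually_ne[OF lDet DL])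
  have evD2: "\<forall>\<^sub>F t in at_right 0. Det n a b p q s t \<noteq> 0"
    using evD by eventually_elim auto
  have lim: "((\<lambda>t. 2  *  (Num n a b p q s t / t^2) / (Det n a b p q s t / t^2)) \<longlongrightarrow> 2  *  NL n a b p q s / DL n a b p q s) (at_right 0)"
    by (intro tendsto_intros lNum lDet DL)
  have ev3: "\<forall>\<^sub>F t in at_right 0. 2  *  (Num n a b p q s t / t^2) / (Det n a b p q s t / t^2) =
      magnitude (Xc n) (\<lambda>x y. s  *  dd n a b p q t x y)"
    using evD2 eventually_at_right_less[of 0]
  proof eventually_elim
    case (elim t)
    then show ?case by (simp add: magnitude_fam[OF n elim(1)])
  qed
  show ?thesis unfolding fX_at_def
  proof
    show "\<forall>\<^sub>F t in at_right 0. has_weighting (Xc n) (\<lambda>x y. s  *  dd n a b p q t x y)"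
      using evD2 by eventually_elim (auto simp: has_weighting_def intro: weighting_fam[OF n])
    show "((\<lambda>t. magnitude (Xc n) (\<lambda>x y. s  *  dd n a b p q t x y)) \<longlongrightarrow> 2  *  NL n a b p q s / DL n a b p q s) (at_right 0)"
      using lim ev3 by (rule Lim_transform_eventually)
  qed
qed

lemma part1:
  fixes l :: real
  assumes l: "l > 1"
  shows "\<exists>(X :: real \<Rightarrow> nat set) d. fmet_path X d \<and> gh_tendsto X d (UNIV :: bool set) K2_dist \<and>
         (\<exists>f. (\<forall>\<^sub>F s in at_right 0. fX_at X d s (f s)) \<and> (f \<longlongrightarrow> l) (at_right 0))"
proof -
  define N0 where "N0 = 3 * l / (25 * (l - 1))"
  define k where "k = (N0 - 108/25) / 12"
  let ?NL = "\<lambda>s. NL 3 (8/5) (9/5) k (-k) s" and ?DL = "\<lambda>s. DL 3 (8/5) (9/5) k (-k) s"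
  have cons: "4 * real (3::nat) = 2 * (real (3::nat) - 1) * (9/5) + real (3::nat) * (8/5)" by simp
  have lN: "((\<lambda>s. ?NL s / s^2) \<longlongrightarrow> 12 * k + 108/25) (at_right 0)"
    unfolding NL_def by real_asymp (simp add: power2_eq_square)
  have Deq: "?DL s / s^2 = (1 + exp (-s)) * (?NL s / s^2) - 6/25" if "s \<noteq> 0" for s
    using that unfolding DL_def by (simp add: field_simps power2_eq_square)
  have N0k: "12 * k + 108/25 = N0" unfolding k_def by (simp add: field_simps)
  have lD: "((\<lambda>s. ?DL s / s^2) \<longlongrightarrow> 2 * N0 - 6/25) (at_right 0)"
  proof -
    have "((\<lambda>s. (1 + exp (-s)) * (?NL s / s^2) - 6/25) \<longlongrightarrow> (1 + exp (-0)) * N0 - 6/25) (at_right 0)"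
      using lN unfolding N0k by (intro tendsto_intros) auto
    then have "((\<lambda>s. (1 + exp (-s)) * (?NL s / s^2) - 6/25) \<longlongrightarrow> 2 * N0 - 6/25) (at_right 0)"
      by simp
    then show ?thesis
      by (rule Lim_transform_eventually) (auto simp: eventually_at_filter Deq)
  qed
  have D0: "2 * N0 - 6/25 \<noteq> 0" and D0pos: "2 * N0 - 6/25 = 6 / (25 * (l - 1))"
    using l unfolding N0_def by (auto simp: field_simps)
  have lim: "((\<lambda>s. 2 * (?NL s / s^2) / (?DL s / s^2)) \<longlongrightarrow> 2 * N0 / (2 * N0 - 6/25)) (at_right 0)"
    using lN unfolding N0k by (intro tendsto_intros lD D0)
  have val: "2 * N0 / (2 * N0 - 6/25) = l"
    using l unfolding D0pos by (simp add: N0_def field_simps)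
  have evD: "\<forall>\<^sub>F s in at_right 0. ?DL s / s^2 \<noteq> 0"
    by (rule tendsto_imp_eventually_ne[OF lD D0])
  define f where "f = (\<lambda>s. 2 * ?NL s / ?DL s)"
  have "\<forall>\<^sub>F s in at_right 0. fX_at (\<lambda>t. Xc 3) (\<lambda>t. dd 3 (8/5) (9/5) k (-k) t) s (f s)"
    using evD
  proof eventually_elim
    case (elim s)
    then have "?DL s \<noteq> 0" by auto
    then show ?case unfolding f_def by (intro fX_fam cons) auto
  qed
  moreover have "(f \<longlongrightarrow> l) (at_right 0)"
  proof -
    have "\<forall>\<^sub>F s in at_right 0. 2 * (?NL s / s^2) / (?DL s / s^2) = f s"
      using eventually_at_right_less[of 0] by eventually_elim (simp add: f_def)
    from Lim_transform_eventually[OF lim this] show ?thesis unfolding val .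
  qed
  moreover have "fmet_path (\<lambda>t. Xc 3) (\<lambda>t. dd 3 (8/5) (9/5) k (-k) t)" by (rule fmet) auto
  moreover have "gh_tendsto (\<lambda>t. Xc 3) (\<lambda>t. dd 3 (8/5) (9/5) k (-k) t) (UNIV::bool set) K2_dist"
    by (rule ghconv) auto
  ultimately show ?thesis by blast
qed

lemma part2:
  fixes L :: real
  assumes L: "L > 2"
  shows "\<exists>(X :: real \<Rightarrow> nat set) d. fmet_path X d \<and> gh_tendsto X d (UNIV :: bool set) K2_dist \<and>
         (\<exists>f. (\<forall>\<^sub>F s in at_top. fX_at X d s (f s)) \<and> (f \<longlongrightarrow> L) at_top)"
proof -
  define n where "n = nat \<lceil>L\<rceil> + 3"
  define rn where "rn = real n"
  have rnL: "rn \<ge> L + 3" unfolding rn_def n_def by linarith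
  have rn5: "rn > 5" using rnL L by linarith
  define aa where "aa = (\<lambda>b::real. (4*rn - 2*(rn-1)*b)/rn)"
  define Nf where "Nf = (\<lambda>b::real. (rn-1)*b^2 + rn*(aa b)^2/2 - 2*rn)"
  define Ef where "Ef = (\<lambda>b::real. (rn-1)*(aa b)*b - 2*rn)"
  define G where "G = (\<lambda>b::real. Nf b / (Nf b + Ef b))"
  have NE: "Nf b + Ef b = (rn-1)*(b-2)^2 + 4" for b
    using rn5 unfolding Nf_def Ef_def aa_def by (simp add: field_simps power2_eq_square)
  have NEpos: "Nf b + Ef b > 0" for b
    unfolding NE using rn5 by (intro add_nonneg_pos mult_nonneg_nonneg) auto
  define b0 where "b0 = rn/(rn-1)"
  have b0: "1 < b0" "b0 < 2" using rn5 unfolding b0_def by (auto simp: field_simps)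
  have aab0: "aa b0 = 2" using rn5 unfolding aa_def b0_def by (simp add: field_simps)
  have "Ef b0 = (rn-1)*2*b0 - 2*rn" unfolding Ef_def aab0 by simp
  then have Eb0: "Ef b0 = 0" using rn5 unfolding b0_def by (simp add: field_simps)
  have Gb0: "G b0 = 1" using NEpos[of b0] unfolding G_def Eb0 by simp
  have Nf2: "Nf 2 = 2*rn - 4 + 8/rn" using rn5 unfolding Nf_def aa_def by (simp add: field_simps power2_eq_square)
  have NE2: "Nf 2 + Ef 2 = 4" unfolding NE by simp
  have "G 2 = Nf 2 / 4" unfolding G_def NE2 by simp
  then have G2: "G 2 = (rn - 2)/2 + 2/rn" unfolding Nf2 using rn5 by (simp add: field_simps)
  have hL: "L*rn \<le> (rn-3)*rn" using rnL rn5 by (intro mult_right_mono) auto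
  have G2L: "L/2 < G 2"
  proof -
    have "L/2 \<le> (rn-3)/2" using rnL by simp
    also have "\<dots> < (rn - 2)/2 + 2/rn"
    proof -
      have "0 < 2/rn" using rn5 by simp
      moreover have "(rn-3)/2 < (rn-2)/2" by (simp add: divide_strict_right_mono)
      ultimately show ?thesis by linarith
    qed
    finally show ?thesis unfolding G2 .
  qed
  have c1: "continuous_on {b0..2} Nf" unfolding Nf_def aa_def using rn5 by (intro continuous_intros) auto
  have c2: "continuous_on {b0..2} (\<lambda>b. Nf b + Ef b)" unfolding NE by (intro continuous_intros)
  have cont: "continuous_on {b0..2} G"
    unfolding G_def using NEpos by (intro continuous_on_divide c1 c2) (auto simp: less_le)
  obtain b where b: "b0 \<le> b" "b \<le> 2" "G b = L/2"
    using IVT'[of G b0 "L/2" 2] Gb0 G2L L b0 cont by auto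
  have bne: "b \<noteq> b0" "b \<noteq> 2" using b Gb0 G2L L by auto
  have bb: "b0 < b" "b < 2" using b bne by auto
  define a where "a = aa b"
  have a: "0 < a" "a < 2"
  proof -
    have "2*(rn-1)*b < 2*(rn-1)*2" using bb rn5 by (intro mult_strict_left_mono) auto
    then show "0 < a" unfolding a_def aa_def using rn5 by (simp add: field_simps)
    have "b0 * (rn-1) < b * (rn-1)" using bb rn5 by (intro mult_strict_right_mono) auto
    then have "rn < b*(rn-1)" unfolding b0_def using rn5 by simp
    then show "a < 2" unfolding a_def aa_def using rn5 by (simp add: field_simps)
  qed
  have cons: "4 * real n = 2 * (real n - 1) * b + real n * a"
    using rn5 unfolding a_def aa_def rn_def by (simp add: field_simps)
  have NLeq: "NL n a b 0 0 s = s^2 * Nf b" for s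
    unfolding NL_def Nf_def a_def rn_def by (simp add: algebra_simps power2_eq_square)
  have DLeq: "DL n a b 0 0 s = s^2 * ((1 + exp(-s)) * Nf b + Ef b)" for s
    unfolding DL_def NLeq unfolding Ef_def a_def rn_def by (simp add: algebra_simps power2_eq_square)
  have lexp: "((\<lambda>s::real. exp (-s)) \<longlongrightarrow> 0) at_top" by real_asymp
  have lDen: "((\<lambda>s. (1 + exp(-s)) * Nf b + Ef b) \<longlongrightarrow> (1 + 0) * Nf b + Ef b) at_top"
    by (intro tendsto_intros lexp)
  have Den0: "(1 + 0) * Nf b + Ef b \<noteq> 0" using NEpos[of b] by simp
  have evDen: "\<forall>\<^sub>F s in at_top. (1 + exp(-s)) * Nf b + Ef b \<noteq> 0"
    by (rule tendsto_imp_eventually_ne[OF lDen Den0])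
  define f where "f = (\<lambda>s. 2 * NL n a b 0 0 s / DL n a b 0 0 s)"
  have "\<forall>\<^sub>F s in at_top. fX_at (\<lambda>t. Xc n) (\<lambda>t. dd n a b 0 0 t) s (f s)"
    using evDen eventually_gt_at_top[of 0]
  proof eventually_elim
    case (elim s)
    then have "DL n a b 0 0 s \<noteq> 0" unfolding DLeq by simp
    then show ?case unfolding f_def by (intro fX_fam cons) (auto simp: n_def)
  qed
  moreover have "(f \<longlongrightarrow> L) at_top"
  proof -
    have "((\<lambda>s. 2 * Nf b / ((1 + exp(-s)) * Nf b + Ef b)) \<longlongrightarrow> 2 * Nf b / ((1 + 0) * Nf b + Ef b)) at_top"
      by (intro tendsto_intros lDen Den0)
    moreover have "2 * Nf b / ((1 + 0) * Nf b + Ef b) = L"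
      using b(3) NEpos[of b] unfolding G_def by (simp add: field_simps)
    moreover have "\<forall>\<^sub>F s in at_top. 2 * Nf b / ((1 + exp(-s)) * Nf b + Ef b) = f s"
      using eventually_gt_at_top[of 0]
      by eventually_elim (simp add: f_def NLeq DLeq)
    ultimately show ?thesis using Lim_transform_eventually by metis
  qed
  moreover have "fmet_path (\<lambda>t. Xc n) (\<lambda>t. dd n a b 0 0 t)" by (rule fmet) (use a bb b0 in auto)
  moreover have "gh_tendsto (\<lambda>t. Xc n) (\<lambda>t. dd n a b 0 0 t) (UNIV::bool set) K2_dist"
    by (rule ghconv) (use a bb b0 in auto)
  ultimately show ?thesis by blast
qed

lemma part3:
  fixes S :: real
  assumes S: "S > 0"
  shows "\<exists>(X :: real \<Rightarrow> nat set) d. fmet_path X d \<and> gh_tendsto X d (UNIV :: bool set) K2_dist \<and>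
         (\<exists>f. (\<forall>\<^sub>F s in at S. fX_at X d s (f s)) \<and>
              \<not> (\<exists>M. \<forall>\<^sub>F s in at S. \<bar>f s\<bar> \<le> M))"
proof -
  define u0 where "u0 = exp (-S)"
  have u0: "0 < u0" unfolding u0_def by simp
  define N2 :: real where "N2 = 108/25"
  define \<nu> where "\<nu> = (6/25)/(1+u0)"
  have \<nu>: "\<nu> > 0" unfolding \<nu>_def using u0 by simp
  define \<beta> where "\<beta> = (\<nu> - N2) * (S+1)"
  define \<gamma> where "\<gamma> = (N2 - \<nu>)/u0"
  define p where "p = \<beta>/12"
  define q where "q = \<gamma>/12"
  define NLf where "NLf = (\<lambda>s. s * (\<beta> + \<gamma> * exp(-s)) + N2 * s^2)"
  define g where "g = (\<lambda>s. (1 + exp(-s))  *  NLf s - (6/25) * s^2)"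
  have NLeq: "NL 3 (8/5) (9/5) p q s = NLf s" for s
    unfolding NL_def NLf_def p_def q_def N2_def by (simp add: algebra_simps power2_eq_square)
  have DLeq: "DL 3 (8/5) (9/5) p q s = g s" for s
    unfolding DL_def g_def NLeq by (simp add: algebra_simps power2_eq_square)
  have bg: "\<beta> + \<gamma> * u0 = (\<nu> - N2) * S" unfolding \<beta>_def \<gamma>_def using u0 by (simp add: field_simps)
  have NLS: "NLf S = \<nu> * S^2" unfolding NLf_def u0_def[symmetric] bg by (simp add: algebra_simps power2_eq_square)
  have gS: "g S = 0" unfolding g_def NLS u0_def[symmetric] \<nu>_def using u0 by (simp add: field_simps)
  define g' where "g' = -(exp(-S)) * (S * (\<beta>+\<gamma> * exp(-S)) + N2 * S^2) + (1+exp(-S)) * ((\<beta>+\<gamma> * exp(-S)) - S * \<gamma> * exp(-S) + 2 * N2 * S) - (12/25) * S"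
  have der: "(g has_real_derivative g') (at S)"
    unfolding g_def NLf_def g'_def
    by (rule derivative_eq_intros refl | simp)+
  have g'v: "g' = -u0 * \<nu> * S^2"
  proof -
    have e1: "\<gamma> * u0 = N2 - \<nu>" unfolding \<gamma>_def using u0 by simp
    have e2: "(1+u0) * \<nu> = 6/25" unfolding \<nu>_def using u0 by (simp add: field_simps)
    have "g' = -u0 * (S * (\<beta>+\<gamma> * u0) + N2 * S^2) + (1+u0) * ((\<beta>+\<gamma> * u0) - S * (\<gamma> * u0) + 2 * N2 * S) - (12/25) * S"
      unfolding g'_def u0_def by (simp add: algebra_simps)
    also have "\<dots> = -u0 * (\<nu> * S^2) + ((1+u0) * \<nu>) * (2 * S) - (12/25) * S"
      by (simp only: bg, simp only: e1, simp add: algebra_simps power2_eq_square)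
    also have "\<dots> = -u0 * \<nu> * S^2" unfolding e2 by simp
    finally show ?thesis .
  qed
  have g'0: "g' \<noteq> 0" unfolding g'v using u0 \<nu> S by simp
  have "((\<lambda>s. (g s - g S)/(s - S)) \<longlongrightarrow> g') (at S)"
    using der unfolding has_field_derivative_iff .
  then have evq: "\<forall>\<^sub>F s in at S. (g s - g S)/(s - S) \<noteq> 0"
    by (rule tendsto_imp_eventually_ne) (rule g'0)
  have evg: "\<forall>\<^sub>F s in at S. g s \<noteq> 0"
    using evq by eventually_elim (auto simp: gS)
  define f where "f = (\<lambda>s. 2  *  NL 3 (8/5) (9/5) p q s / DL 3 (8/5) (9/5) p q s)"
  have cons: "4  *  real (3::nat) = 2  *  (real (3::nat) - 1)  *  (9/5) + real (3::nat)  *  (8/5)" by simp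
  have "\<forall>\<^sub>F s in at S. fX_at (\<lambda>t. Xc 3) (\<lambda>t. dd 3 (8/5) (9/5) p q t) s (f s)"
    using evg
  proof eventually_elim
    case (elim s)
    then have "DL 3 (8/5) (9/5) p q s \<noteq> 0" unfolding DLeq .
    then show ?case unfolding f_def by (intro fX_fam cons) auto
  qed
  moreover have "\<not> (\<exists>M. \<forall>\<^sub>F s in at S. \<bar>f s\<bar> \<le> M)"
  proof
    assume "\<exists>M. \<forall>\<^sub>F s in at S. \<bar>f s\<bar> \<le> M"
    then obtain M where M: "\<forall>\<^sub>F s in at S. \<bar>f s\<bar> \<le> M" by blast
    have cg: "isCont g S" by (rule DERIV_isCont[OF der])
    have cN: "isCont NLf S" unfolding NLf_def by (intro continuous_intros)
    have lim: "((\<lambda>s. M  *  \<bar>g s\<bar> - \<bar>2  *  NLf s\<bar>) \<longlongrightarrow> M  *  \<bar>g S\<bar> - \<bar>2  *  NLf S\<bar>) (at S)"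
      using cg cN unfolding isCont_def by (intro tendsto_intros)
    have neg: "M  *  \<bar>g S\<bar> - \<bar>2  *  NLf S\<bar> < 0" unfolding gS NLS using \<nu> S by simp
    have "\<forall>\<^sub>F s in at S. M  *  \<bar>g s\<bar> - \<bar>2  *  NLf s\<bar> < 0"
      using lim neg by (rule order_tendstoD(2))
    with M evg have "\<forall>\<^sub>F s in at S. False"
    proof eventually_elim
      case (elim s)
      have "\<bar>f s\<bar> = \<bar>2  *  NLf s\<bar> / \<bar>g s\<bar>" unfolding f_def NLeq DLeq by (simp add: abs_divide)
      with elim have "\<bar>2  *  NLf s\<bar> \<le> M  *  \<bar>g s\<bar>" by (simp add: divide_le_eq)
      with elim show False by simp
    qed
    then show False by simp
  qed
  moreover have "fmet_path (\<lambda>t. Xc 3) (\<lambda>t. dd 3 (8/5) (9/5) p q t)" by (rule fmet) auto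
  moreover have "gh_tendsto (\<lambda>t. Xc 3) (\<lambda>t. dd 3 (8/5) (9/5) p q t) (UNIV::bool set) K2_dist"
    by (rule ghconv) auto
  ultimately show ?thesis by blast
qed

theorem theorem2p7:
  shows
   "(\<forall>l::real. l > 1 \<longrightarrow>
      (\<exists>(X :: real \<Rightarrow> nat set) d. fmet_path X d \<and> gh_tendsto X d (UNIV :: bool set) K2_dist \<and>
         (\<exists>f. (\<forall>\<^sub>F s in at_right 0. fX_at X d s (f s)) \<and> (f \<longlongrightarrow> l) (at_right 0)))) \<and>
    (\<forall>L::real. L > 2 \<longrightarrow>
      (\<exists>(X :: real \<Rightarrow> nat set) d. fmet_path X d \<and> gh_tendsto X d (UNIV :: bool set) K2_dist \<and>
         (\<exists>f. (\<forall>\<^sub>F s in at_top. fX_at X d s (f s)) \<and> (f \<longlongrightarrow> L) at_top))) \<and>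
    (\<forall>S::real. S > 0 \<longrightarrow>
      (\<exists>(X :: real \<Rightarrow> nat set) d. fmet_path X d \<and> gh_tendsto X d (UNIV :: bool set) K2_dist \<and>
         (\<exists>f. (\<forall>\<^sub>F s in at S. fX_at X d s (f s)) \<and>
              \<not> (\<exists>M. \<forall>\<^sub>F s in at S. \<bar>f s\<bar> \<le> M))))"
  using part1 part2 part3 by blast

end
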